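(* Let $n\ge 1$, let $B_1,\dots,B_n$ be independent real-valued service times with finite means $\mu_i$ and variances $\sigma_i^2$, and let $\omega\in(0,1)$. Assume $B_1\le_{\mathrm{dil}}B_2\le_{\mathrm{dil}}\cdots\le_{\mathrm{dil}}B_n$. Then $$\varrho_\omega=\frac{C(\mathrm{Id},\boldsymbol\mu,\omega)}{\min_{\tau\in\mathsf S_n}C(\tau,\boldsymbol\mu,\omega)}\le 4.$$
   Context: Appointment model: a sequence is a permutation $\tau\in\mathsf S_n$ of $\{1,\dots,n\}$, $\tau(i)$ being the patient in appointment slot $i$. A schedule is a vector $\boldsymbol x=(x_1,\dots,x_n)$, where $x_j$ is the interarrival time between patient $j$ and the next patient. Waiting times $W_i$ and idle times $I_i$ of slot $i$ are given by $W_1=I_1=0$ and $W_{i+1}=(W_i+B_{\tau(i)}-x_{\tau(i)})^+$, $I_{i+1}=(W_i+B_{\tau(i)}-x_{\tau(i)})^-$, where $a^+=\max\{0,a\}$, $a^-=\max\{0,-a\}$. The cost is $C(\tau,\boldsymbol x,\omega)=\omega\sum_{i=1}^n\mathbb E I_i+(1-\omega)\sum_{i=1}^n\mathbb E W_i$. The mean-based schedule is $\boldsymbol\mu=(\mu_1,\dots,\mu_n)$, and $\mathrm{Id}$ is the identity permutation. For random variables $A,B$, $A\le_{\mathrm{cx}}B$ means $\mathbb E\phi(A)\le\mathbb E\phi(B)$ for all convex $\phi:\mathbb R\to\mathbb R$ for which the expectations exist, and $A\le_{\mathrm{dil}}B$ means $A-\mathbb EA\le_{\mathrm{cx}}B-\mathbb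 EB$. *)

theory Defs
  imports "HOL-Probability.Probability" "HOL-Combinatorics.Permutations"
begin

definition cx_le :: "'a measure \<Rightarrow> ('a \<Rightarrow> real) \<Rightarrow> ('a \<Rightarrow> real) \<Rightarrow> bool" where
  "cx_le M X Y \<longleftrightarrow>
     (\<forall>\<phi> :: real \<Rightarrow> real. convex_on UNIV \<phi> \<longrightarrow>
        integrable M (\<lambda>s. \<phi> (X s)) \<longrightarrow> integrable M (\<lambda>s. \<phi> (Y s)) \<longrightarrow>
        (\<integral>s. \<phi> (X s) \<partial>M) \<le> (\<integral>s. \<phi> (Y s) \<partial>M))"

definition dil_le :: "'a measure \<Rightarrow> ('a \<Rightarrow> real) \<Rightarrow> ('a \<Rightarrow> real) \<Rightarrow> bool" where
  "dil_le M X Y \<longleftrightarrow>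
     cx_le M (\<lambda>s. X s - (\<integral>t. X t \<partial>M)) (\<lambda>s. Y s - (\<integral>t. Y t \<partial>M))"

text \<open>Index shift: wait tau x B k s is W_{k+1} (slot k+1),
  so wait tau x B 0 = W_1 = 0 and
  W_{k+2} = (W_{k+1} + B_{tau(k+1)} - x_{tau(k+1)})^+,
  I_{k+2} = (W_{k+1} + B_{tau(k+1)} - x_{tau(k+1)})^-.\<close>
fun wait :: "(nat \<Rightarrow> nat) \<Rightarrow> (nat \<Rightarrow> real) \<Rightarrow> (nat \<Rightarrow> 'a \<Rightarrow> real) \<Rightarrow> nat \<Rightarrow> 'a \<Rightarrow> real" where
  "wait \<tau> x B 0 s = 0"
| "wait \<tau> x B (Suc k) s = max 0 (wait \<tau> x B k s + B (\<tau> (Suc k)) s - x (\<tau> (Suc k)))"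

fun idle :: "(nat \<Rightarrow> nat) \<Rightarrow> (nat \<Rightarrow> real) \<Rightarrow> (nat \<Rightarrow> 'a \<Rightarrow> real) \<Rightarrow> nat \<Rightarrow> 'a \<Rightarrow> real" where
  "idle \<tau> x B 0 s = 0"
| "idle \<tau> x B (Suc k) s = max 0 (- (wait \<tau> x B k s + B (\<tau> (Suc k)) s - x (\<tau> (Suc k))))"

definition cost :: "'a measure \<Rightarrow> (nat \<Rightarrow> 'a \<Rightarrow> real) \<Rightarrow> nat \<Rightarrow> (nat \<Rightarrow> nat) \<Rightarrow> (nat \<Rightarrow> real) \<Rightarrow> real \<Rightarrow> real" where
  "cost M B n \<tau> x w =
     w * (\<Sum>i=1..n. \<integral>s. idle \<tau> x B (i - 1) s \<partial>M)
     + (1 - w) * (\<Sum>i=1..n. \<integral>s. wait \<tau> x B (i - 1) s \<partial>M)"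

definition mean_sched :: "'a measure \<Rightarrow> (nat \<Rightarrow> 'a \<Rightarrow> real) \<Rightarrow> nat \<Rightarrow> real" where
  "mean_sched M B j = (\<integral>s. B j s \<partial>M)"

end

theory Submission
  imports Defs
begin



lemma wait_nonneg: "0 \<le> wait \<tau> x B k s"
  by (cases k) auto

lemma sum_Suc_split: "j \<le> k \<Longrightarrow> (\<Sum>i\<in>{j<..Suc k}. f i) = (\<Sum>i\<in>{j<..k}. f i) + (f (Suc k)::real)"
proof -
  assume "j \<le> k"
  then have "{j<..Suc k} = insert (Suc k) {j<..k}" by auto
  then show ?thesis by simp
qed

lemma wait_ge_suffix: "j \<le> k \<Longrightarrow> (\<Sum>i\<in>{j<..k}. B (\<tau> i) s - x (\<tau> i)) \<le> wait \<tau> x B k s"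
proof (induction k arbitrary: j)
  case 0 then show ?case by simp
next
  case (Suc k)
  show ?case
  proof (cases "j = Suc k")
    case True then show ?thesis by (simp add: wait_nonneg del: wait.simps)
  next
    case False
    then have "j \<le> k" using Suc.prems by simp
    then have "(\<Sum>i\<in>{j<..Suc k}. B (\<tau> i) s - x (\<tau> i)) = (\<Sum>i\<in>{j<..k}. B (\<tau> i) s - x (\<tau> i)) + (B (\<tau> (Suc k)) s - x (\<tau> (Suc k)))"
      by (rule sum_Suc_split)
    also have "\<dots> \<le> wait \<tau> x B k s + (B (\<tau> (Suc k)) s - x (\<tau> (Suc k)))"
      using Suc.IH[OF \<open>j \<le> k\<close>] by simp
    also have "\<dots> \<le> wait \<tau> x B (Suc k) s" by simp
    finally show ?thesis .
  qed
qed

lemma wait_attained: "\<exists>j\<le>k. wait \<tau> x B k s = (\<Sum>i\<in>{j<..k}. B (\<tau> i) s - x (\<tau> i))"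
proof (induction k)
  case 0 then show ?case by simp
next
  case (Suc k)
  then obtain j where j: "j \<le> k" "wait \<tau> x B k s = (\<Sum>i\<in>{j<..k}. B (\<tau> i) s - x (\<tau> i))" by blast
  show ?case
  proof (cases "wait \<tau> x B k s + B (\<tau> (Suc k)) s - x (\<tau> (Suc k)) \<le> 0")
    case True
    then show ?thesis by (intro exI[of _ "Suc k"]) simp
  next
    case False
    then show ?thesis using j sum_Suc_split[OF j(1), of "\<lambda>i. B (\<tau> i) s - x (\<tau> i)"]
      by (intro exI[of _ j]) auto
  qed
qed

lemma wait_Max: "wait \<tau> x B k s = Max ((\<lambda>j. \<Sum>i\<in>{j<..k}. B (\<tau> i) s - x (\<tau> i)) ` {..k})"
proof -
  have ex: "\<exists>j\<le>k. wait \<tau> x B k s = (\<Sum>i\<in>{j<..k}. B (\<tau> i) s - x (\<tau> i))"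
    by (rule wait_attained)
  from ex obtain j where j: "j \<le> k" "wait \<tau> x B k s = (\<Sum>i\<in>{j<..k}. B (\<tau> i) s - x (\<tau> i))"
    by auto
  show ?thesis
  proof (rule Max_eqI[symmetric])
    show "finite ((\<lambda>j. \<Sum>i\<in>{j<..k}. B (\<tau> i) s - x (\<tau> i)) ` {..k})" by simp
  next
    fix y assume "y \<in> (\<lambda>j. \<Sum>i\<in>{j<..k}. B (\<tau> i) s - x (\<tau> i)) ` {..k}"
    then obtain j' where j': "j' \<le> k" "y = (\<Sum>i\<in>{j'<..k}. B (\<tau> i) s - x (\<tau> i))" by auto
    show "y \<le> wait \<tau> x B k s" unfolding j'(2) by (rule wait_ge_suffix[OF j'(1)])
  next
    show "wait \<tau> x B k s \<in> (\<lambda>j. \<Sum>i\<in>{j<..k}. B (\<tau> i) s - x (\<tau> i)) ` {..k}"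
      unfolding j(2) using j(1) by (intro imageI) simp
  qed
qed

lemma wait_ge_sum: "(\<Sum>i\<in>{0<..k}. B (\<tau> i) s - x (\<tau> i)) \<le> wait \<tau> x B k s"
  using wait_ge_suffix[of 0 k] by simp

lemma wait_idle: "wait \<tau> x B (Suc k) s - idle \<tau> x B (Suc k) s = wait \<tau> x B k s + B (\<tau> (Suc k)) s - x (\<tau> (Suc k))"
  by simp




definition cen :: "'a measure \<Rightarrow> (nat \<Rightarrow> 'a \<Rightarrow> real) \<Rightarrow> nat \<Rightarrow> 'a \<Rightarrow> real" where
  "cen M B i s = B i s - (\<integral>t. B i t \<partial>M)"

lemma (in prob_space) indep_integral_split:
  fixes f :: "real \<times> real \<Rightarrow> real"
  assumes ind: "indep_var borel Z borel Y" and f[measurable]: "f \<in> borel_measurable (borel \<Otimes>\<^sub>M borel)"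
    and int: "integrable M (\<lambda>s. f (Z s, Y s))"
  shows "(\<integral>s. f (Z s, Y s) \<partial>M) = (\<integral>z. (\<integral>s. f (z, Y s) \<partial>M) \<partial>distr M borel Z)"
proof -
  have rv: "random_variable borel Z" "random_variable borel Y"
    using ind by (auto simp: indep_var_distribution_eq)
  note [measurable] = rv
  have eq: "distr M borel Z \<Otimes>\<^sub>M distr M borel Y = distr M (borel \<Otimes>\<^sub>M borel) (\<lambda>x. (Z x, Y x))"
    using ind by (simp add: indep_var_distribution_eq)
  interpret P: pair_sigma_finite "distr M borel Z" "distr M borel Y"
    by (intro pair_sigma_finite.intro prob_space_imp_sigma_finite prob_space_distr) (simp_all add: rv)
  have int2: "integrable (distr M borel Z \<Otimes>\<^sub>M distr M borel Y) f"
    unfolding eq by (subst integrable_distr_eq) (simp_all add: int)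
  have "(\<integral>s. f (Z s, Y s) \<partial>M) = integral\<^sup>L (distr M (borel \<Otimes>\<^sub>M borel) (\<lambda>x. (Z x, Y x))) f"
    by (subst integral_distr) simp_all
  also have "\<dots> = integral\<^sup>L (distr M borel Z \<Otimes>\<^sub>M distr M borel Y) f" by (simp add: eq)
  also have "\<dots> = (\<integral>z. (\<integral>y. f (z, y) \<partial>distr M borel Y) \<partial>distr M borel Z)"
    by (rule P.integral_fst'[OF int2, symmetric])
  also have "\<dots> = (\<integral>z. (\<integral>s. f (z, Y s) \<partial>M) \<partial>distr M borel Z)"
    by (intro Bochner_Integration.integral_cong refl) (subst integral_distr; simp_all)
  finally show ?thesis .
qed


lemma (in prob_space) indep_integrable_split:
  fixes f :: "real \<times> real \<Rightarrow> real"
  assumes ind: "indep_var borel Z borel Y" and f[measurable]: "f \<in> borel_measurable (borel \<Otimes>\<^sub>M borel)"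
    and int: "integrable M (\<lambda>s. f (Z s, Y s))"
  shows "integrable (distr M borel Z) (\<lambda>z. (\<integral>s. f (z, Y s) \<partial>M))"
proof -
  have rv: "random_variable borel Z" "random_variable borel Y"
    using ind by (auto simp: indep_var_distribution_eq)
  note [measurable] = rv
  have eq: "distr M borel Z \<Otimes>\<^sub>M distr M borel Y = distr M (borel \<Otimes>\<^sub>M borel) (\<lambda>x. (Z x, Y x))"
    using ind by (simp add: indep_var_distribution_eq)
  interpret P: pair_sigma_finite "distr M borel Z" "distr M borel Y"
    by (intro pair_sigma_finite.intro prob_space_imp_sigma_finite prob_space_distr) (simp_all add: rv)
  have int2: "integrable (distr M borel Z \<Otimes>\<^sub>M distr M borel Y) f"
    unfolding eq by (subst integrable_distr_eq) (simp_all add: int)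
  have "integrable (distr M borel Z) (\<lambda>z. (\<integral>y. f (z, y) \<partial>distr M borel Y))"
    by (rule P.integrable_fst'[OF int2])
  then show ?thesis
    by (rule Bochner_Integration.integrable_cong[THEN iffD1, rotated -1]) (simp_all add: integral_distr)
qed

lemma convex_pos_shift: "convex_on UNIV (\<lambda>v::real. max 0 (z + v))"
proof (rule convex_onI)
  fix t x y :: real assume t: "0 < t" "t < 1"
  have a: "(1 - t) * (z + x) \<le> (1 - t) * max 0 (z + x)" using t by (intro mult_left_mono) auto
  have b: "t * (z + y) \<le> t * max 0 (z + y)" using t by (intro mult_left_mono) auto
  have c: "0 \<le> (1 - t) * max 0 (z + x)" "0 \<le> t * max 0 (z + y)" using t by auto
  have "z + ((1 - t) *\<^sub>R x + t *\<^sub>R y) = (1 - t) * (z + x) + t * (z + y)" by (simp add: algebra_simps)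
  then show "max 0 (z + ((1 - t) *\<^sub>R x + t *\<^sub>R y)) \<le> (1 - t) * max 0 (z + x) + t * max 0 (z + y)"
    using a b c by simp
qed simp

locale sched = prob_space M for M :: "'a measure" +
  fixes B :: "nat \<Rightarrow> 'a \<Rightarrow> real" and n :: nat
  assumes indep: "indep_vars (\<lambda>_. borel) B {1..n}"
    and intB: "\<And>i. i \<in> {1..n} \<Longrightarrow> integrable M (B i)"
    and dil: "\<And>i. i \<in> {1..<n} \<Longrightarrow> dil_le M (B i) (B (Suc i))"
begin

abbreviation "Y \<equiv> cen M B"

lemma Y_int: "i \<in> {1..n} \<Longrightarrow> integrable M (Y i)"
  unfolding cen_def[abs_def] using intB by auto

lemma Y_meas[measurable]: "i \<in> {1..n} \<Longrightarrow> Y i \<in> borel_measurable M"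
  using Y_int by auto

lemma Y_mean: "i \<in> {1..n} \<Longrightarrow> (\<integral>s. Y i s \<partial>M) = 0"
  unfolding cen_def using intB by (simp add: prob_space)

lemma Y_indep: "indep_vars (\<lambda>_. borel) Y {1..n}"
proof -
  have "indep_vars (\<lambda>_. borel) (\<lambda>i x. (\<lambda>v. v - (\<integral>t. B i t \<partial>M)) (B i x)) {1..n}"
    by (rule indep_vars_compose2[OF indep]) simp
  then show ?thesis by (simp add: cen_def[abs_def])
qed

lemma cx_step: "i \<in> {1..<n} \<Longrightarrow> (\<integral>s. max 0 (z + Y i s) \<partial>M) \<le> (\<integral>s. max 0 (z + Y (Suc i) s) \<partial>M)"
proof -
  assume i: "i \<in> {1..<n}"
  have "cx_le M (Y i) (Y (Suc i))"
    using dil[OF i] unfolding dil_le_def by (simp add: cen_def[abs_def])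
  moreover have "integrable M (\<lambda>s. max 0 (z + Y i s))" "integrable M (\<lambda>s. max 0 (z + Y (Suc i) s))"
    using i by (auto intro!: integrable_max Y_int)
  ultimately show ?thesis unfolding cx_le_def using convex_pos_shift[of z] by blast
qed

lemma cx_mono:
  assumes "1 \<le> i" "i \<le> j" "j \<le> n"
  shows "(\<integral>s. max 0 (z + Y i s) \<partial>M) \<le> (\<integral>s. max 0 (z + Y j s) \<partial>M)"
  using assms(2,3)
proof (induction j rule: dec_induct)
  case base then show ?case by simp
next
  case (step j)
  then have "(\<integral>s. max 0 (z + Y j s) \<partial>M) \<le> (\<integral>s. max 0 (z + Y (Suc j) s) \<partial>M)"
    using assms(1) by (intro cx_step) auto
  with step show ?case by simp
qed

lemma indep_sum_one:
  assumes A: "A \<subseteq> {1..n}" and i: "i \<in> {1..n}" "i \<notin> A"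
  shows "indep_var borel (\<lambda>s. \<Sum>l\<in>A. Y l s) borel (Y i)"
proof -
  have "indep_var (PiM A (\<lambda>_. borel)) (\<lambda>\<omega>. restrict (\<lambda>l. Y l \<omega>) A) (PiM {i} (\<lambda>_. borel)) (\<lambda>\<omega>. restrict (\<lambda>l. Y l \<omega>) {i})"
    using A i by (intro indep_var_restrict[OF Y_indep]) auto
  then have "indep_var borel ((\<lambda>f. \<Sum>l\<in>A. f l) \<circ> (\<lambda>\<omega>. restrict (\<lambda>l. Y l \<omega>) A)) borel ((\<lambda>f. f i) \<circ> (\<lambda>\<omega>. restrict (\<lambda>l. Y l \<omega>) {i}))"
    by (rule indep_var_compose) measurable
  moreover have "((\<lambda>f. \<Sum>l\<in>A. f l) \<circ> (\<lambda>\<omega>. restrict (\<lambda>l. Y l \<omega>) A)) = (\<lambda>s. \<Sum>l\<in>A. Y l s)"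
    by (auto simp: fun_eq_iff intro!: sum.cong)
  moreover have "((\<lambda>f. f i) \<circ> (\<lambda>\<omega>. restrict (\<lambda>l. Y l \<omega>) {i})) = Y i"
    by (auto simp: fun_eq_iff)
  ultimately show ?thesis by simp
qed

lemma swap_one:
  assumes A: "A \<subseteq> {1..n}" and i: "i \<in> {1..n}" "i \<notin> A" and j: "j \<in> {1..n}" "j \<notin> A" and ij: "i \<le> j"
  shows "(\<integral>s. max 0 ((\<Sum>l\<in>A. Y l s) + Y i s) \<partial>M) \<le> (\<integral>s. max 0 ((\<Sum>l\<in>A. Y l s) + Y j s) \<partial>M)"
proof -
  let ?Z = "\<lambda>s. \<Sum>l\<in>A. Y l s"
  let ?f = "\<lambda>p::real\<times>real. max 0 (fst p + snd p)"
  have fm: "?f \<in> borel_measurable (borel \<Otimes>\<^sub>M borel)" by measurable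
  have finA: "finite A" using A finite_subset by blast
  have Zint: "integrable M ?Z" using A by (intro Bochner_Integration.integrable_sum Y_int) auto
  have int_i: "integrable M (\<lambda>s. ?f (?Z s, Y i s))" using i Zint Y_int by (auto intro!: integrable_max)
  have int_j: "integrable M (\<lambda>s. ?f (?Z s, Y j s))" using j Zint Y_int by (auto intro!: integrable_max)
  have Ii: "indep_var borel ?Z borel (Y i)" using indep_sum_one A i by blast
  have Ij: "indep_var borel ?Z borel (Y j)" using indep_sum_one A j by blast
  have "(\<integral>s. ?f (?Z s, Y i s) \<partial>M) = (\<integral>z. (\<integral>s. ?f (z, Y i s) \<partial>M) \<partial>distr M borel ?Z)"
    by (rule indep_integral_split[OF Ii fm int_i])
  also have "\<dots> \<le> (\<integral>z. (\<integral>s. ?f (z, Y j s) \<partial>M) \<partial>distr M borel ?Z)"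
  proof (rule integral_mono)
    show "integrable (distr M borel ?Z) (\<lambda>z. \<integral>s. ?f (z, Y i s) \<partial>M)"
      by (rule indep_integrable_split[OF Ii fm int_i])
    show "integrable (distr M borel ?Z) (\<lambda>z. \<integral>s. ?f (z, Y j s) \<partial>M)"
      by (rule indep_integrable_split[OF Ij fm int_j])
    fix z show "(\<integral>s. ?f (z, Y i s) \<partial>M) \<le> (\<integral>s. ?f (z, Y j s) \<partial>M)"
      using cx_mono[of i j z] i j ij by simp
  qed
  also have "\<dots> = (\<integral>s. ?f (?Z s, Y j s) \<partial>M)"
    by (rule indep_integral_split[OF Ij fm int_j, symmetric])
  finally show ?thesis by simp
qed

lemma swap_set:
  assumes "S \<subseteq> {1..n}" "card S = k"
  shows "(\<integral>s. max 0 (\<Sum>l\<in>{1..k}. Y l s) \<partial>M) \<le> (\<integral>s. max 0 (\<Sum>l\<in>S. Y l s) \<partial>M)"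
  using assms
proof (induction "card (S - {1..k})" arbitrary: S rule: less_induct)
  case less
  have finS: "finite S" using less.prems finite_subset by blast
  show ?case
  proof (cases "S - {1..k} = {}")
    case True
    then have "S \<subseteq> {1..k}" by auto
    then have "S = {1..k}" using less.prems by (intro card_subset_eq) auto
    then show ?thesis by simp
  next
    case False
    then obtain j where j: "j \<in> S" "j \<notin> {1..k}" by blast
    have "\<not> {1..k} \<subseteq> S"
    proof
      assume "{1..k} \<subseteq> S"
      then have "{1..k} = S" using less.prems finS by (intro card_subset_eq) auto
      with j show False by blast
    qed
    then obtain i where i: "i \<in> {1..k}" "i \<notin> S" by blast
    have kn: "k \<le> n" using less.prems card_mono[of "{1..n}" S] by auto
    have ij: "i \<le> j" using i j less.prems by auto
    let ?A = "S - {j}"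
    let ?S' = "insert i ?A"
    have sub': "?S' \<subseteq> {1..n}" using less.prems i kn by auto
    have card': "card ?S' = k" using less.prems i j finS by (simp add: card_insert_if)
    have lt: "card (?S' - {1..k}) < card (S - {1..k})"
    proof -
      have "?S' - {1..k} = (S - {1..k}) - {j}" using i by auto
      moreover have "j \<in> S - {1..k}" using j by blast
      ultimately show ?thesis using finS by (metis card_Diff1_less finite_Diff)
    qed
    have IH: "(\<integral>s. max 0 (\<Sum>l\<in>{1..k}. Y l s) \<partial>M) \<le> (\<integral>s. max 0 (\<Sum>l\<in>?S'. Y l s) \<partial>M)"
      using less.hyps[OF lt sub' card'] .
    have e1: "(\<Sum>l\<in>?S'. Y l s) = (\<Sum>l\<in>?A. Y l s) + Y i s" for s
      using i finS by (simp add: add.commute)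
    have e2: "(\<Sum>l\<in>S. Y l s) = (\<Sum>l\<in>?A. Y l s) + Y j s" for s
      using j finS by (simp add: sum.remove add.commute)
    have "(\<integral>s. max 0 ((\<Sum>l\<in>?A. Y l s) + Y i s) \<partial>M) \<le> (\<integral>s. max 0 ((\<Sum>l\<in>?A. Y l s) + Y j s) \<partial>M)"
      using less.prems i j kn ij by (intro swap_one) auto
    then show ?thesis using IH by (simp add: e1 e2)
  qed
qed

end




definition Yt :: "'a measure \<Rightarrow> (nat \<Rightarrow> 'a \<Rightarrow> real) \<Rightarrow> nat \<Rightarrow> nat \<Rightarrow> 'a \<Rightarrow> real" where
  "Yt M B n i s = (if i \<in> {1..n} then cen M B i s else 0)"
definition Qd :: "'a measure \<Rightarrow> (nat \<Rightarrow> 'a \<Rightarrow> real) \<Rightarrow> nat \<Rightarrow> nat \<Rightarrow> real measure" where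
  "Qd M B n i = distr M borel (Yt M B n i)"
definition KK :: "nat \<Rightarrow> (bool \<times> nat) set" where
  "KK n = UNIV \<times> {1..n}"
definition Om :: "'a measure \<Rightarrow> (nat \<Rightarrow> 'a \<Rightarrow> real) \<Rightarrow> nat \<Rightarrow> (bool \<times> nat \<Rightarrow> real) measure" where
  "Om M B n = PiM (KK n) (\<lambda>\<kappa>. Qd M B n (snd \<kappa>))"

locale sched2 = sched + assumes n_pos: "1 \<le> n"
begin

abbreviation "\<Omega> \<equiv> Om M B n"
abbreviation "I \<equiv> {1..n}"

lemma Yt_meas[measurable]: "Yt M B n i \<in> borel_measurable M"
proof (cases "i \<in> {1..n}")
  case True then show ?thesis using Y_meas[of i] by (simp add: Yt_def[abs_def])
next
  case False
  then have "Yt M B n i = (\<lambda>_. 0)" by (auto simp: Yt_def fun_eq_iff)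
  then show ?thesis by simp
qed

lemma Yt_eq: "i \<in> {1..n} \<Longrightarrow> Yt M B n i = Y i"
  by (simp add: Yt_def[abs_def])

lemma Qd_prob: "prob_space (Qd M B n i)"
  unfolding Qd_def by (rule prob_space_distr) simp

lemma sets_Qd[simp, measurable_cong]: "sets (Qd M B n i) = sets borel"
  unfolding Qd_def by simp

lemma space_Qd[simp]: "space (Qd M B n i) = UNIV"
  unfolding Qd_def by simp

lemma meas_to_Qd: "measurable N (Qd M B n i) = measurable N borel"
  by (rule measurable_cong_sets) simp_all

lemma meas_from_Qd: "measurable (Qd M B n i) N = measurable borel N"
  by (rule measurable_cong_sets) simp_all

lemma prob_Om: "prob_space \<Omega>"
  unfolding Om_def by (intro prob_space_PiM Qd_prob)

lemma space_Om: "space \<Omega> = (\<Pi>\<^sub>E \<kappa>\<in>KK n. UNIV)"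
  unfolding Om_def by (simp add: space_PiM)

lemma coord_meas[measurable]: "(\<lambda>\<omega>. \<omega> \<kappa>) \<in> borel_measurable \<Omega>"
proof (cases "\<kappa> \<in> KK n")
  case True
  have "(\<lambda>\<omega>. \<omega> \<kappa>) \<in> measurable \<Omega> (Qd M B n (snd \<kappa>))"
    unfolding Om_def using True by (rule measurable_component_singleton)
  then show ?thesis by (simp only: meas_to_Qd)
next
  case False
  have eq: "\<omega> \<kappa> = undefined" if "\<omega> \<in> space \<Omega>" for \<omega>
  proof -
    have "\<omega> \<in> (\<Pi>\<^sub>E \<kappa>\<in>KK n. UNIV)" using that by (simp only: space_Om)
    then show ?thesis using False by (rule PiE_arb)
  qed
  have "(\<lambda>\<omega>. \<omega> \<kappa>) \<in> borel_measurable \<Omega> \<longleftrightarrow> (\<lambda>\<omega>. undefined::real) \<in> borel_measurable \<Omega>"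
    by (rule measurable_cong) (rule eq)
  then show ?thesis by simp
qed

lemma Yt_indep: "indep_vars (\<lambda>_. borel) (Yt M B n) I"
proof -
  have "indep_vars (\<lambda>_. borel) (Yt M B n) I = indep_vars (\<lambda>_. borel) Y I"
    by (rule indep_vars_cong) (auto simp: Yt_eq)
  then show ?thesis using Y_indep by simp
qed

lemma D1: "distr M (PiM I (\<lambda>_. borel)) (\<lambda>s. \<lambda>i\<in>I. Yt M B n i s) = PiM I (Qd M B n)"
proof -
  have "indep_vars (\<lambda>_. borel) (Yt M B n) I \<longleftrightarrow>
    distr M (PiM I (\<lambda>_. borel)) (\<lambda>s. \<lambda>i\<in>I. Yt M B n i s) = PiM I (\<lambda>i. distr M borel (Yt M B n i))"
    by (rule indep_vars_iff_distr_eq_PiM) (use n_pos in auto)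
  then show ?thesis using Yt_indep unfolding Qd_def[abs_def] by simp
qed

lemma D2: "distr \<Omega> (PiM I (Qd M B n)) (\<lambda>\<omega>. \<lambda>i\<in>I. \<omega> (b, i)) = PiM I (Qd M B n)"
  using distr_PiM_reindex[of "KK n" "\<lambda>\<kappa>. Qd M B n (snd \<kappa>)" "Pair b" I]
  unfolding Om_def by (simp add: Qd_prob KK_def inj_on_def)

lemma sets_PiI: "sets (PiM I (Qd M B n)) = sets (PiM I (\<lambda>_. borel))"
  by (intro sets_PiM_cong) simp_all

lemma meas_PiI: "measurable (PiM I (Qd M B n)) N = measurable (PiM I (\<lambda>_. borel)) N"
  by (rule measurable_cong_sets[OF sets_PiI refl])

lemma TR:
  fixes F :: "(nat \<Rightarrow> real) \<Rightarrow> real"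
  assumes F: "F \<in> borel_measurable (PiM I (\<lambda>_. borel))"
  shows "(\<integral>s. F (\<lambda>i\<in>I. Yt M B n i s) \<partial>M) = (\<integral>\<omega>. F (\<lambda>i\<in>I. \<omega> (b, i)) \<partial>\<Omega>)"
proof -
  have F': "F \<in> borel_measurable (PiM I (Qd M B n))"
    using F by (simp only: meas_PiI)
  have m1: "(\<lambda>s. \<lambda>i\<in>I. Yt M B n i s) \<in> measurable M (PiM I (\<lambda>_. borel))" by measurable
  have m2: "(\<lambda>\<omega>. \<lambda>i\<in>I. \<omega> (b, i)) \<in> measurable \<Omega> (PiM I (Qd M B n))"
    unfolding Om_def by (rule measurable_restrict) (auto simp: KK_def)
  have "(\<integral>s. F (\<lambda>i\<in>I. Yt M B n i s) \<partial>M) = integral\<^sup>L (PiM I (Qd M B n)) F"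
    using integral_distr[OF m1 F] unfolding D1 by simp
  also have "\<dots> = (\<integral>\<omega>. F (\<lambda>i\<in>I. \<omega> (b, i)) \<partial>\<Omega>)"
    using integral_distr[OF m2 F'] unfolding D2 by simp
  finally show ?thesis .
qed

lemma TR_int:
  fixes F :: "(nat \<Rightarrow> real) \<Rightarrow> real"
  assumes F: "F \<in> borel_measurable (PiM I (\<lambda>_. borel))"
  shows "integrable M (\<lambda>s. F (\<lambda>i\<in>I. Yt M B n i s)) \<longleftrightarrow> integrable \<Omega> (\<lambda>\<omega>. F (\<lambda>i\<in>I. \<omega> (b, i)))"
proof -
  have F': "F \<in> borel_measurable (PiM I (Qd M B n))"
    using F by (simp only: meas_PiI)
  have m1: "(\<lambda>s. \<lambda>i\<in>I. Yt M B n i s) \<in> measurable M (PiM I (\<lambda>_. borel))" by measurable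
  have m2: "(\<lambda>\<omega>. \<lambda>i\<in>I. \<omega> (b, i)) \<in> measurable \<Omega> (PiM I (Qd M B n))"
    unfolding Om_def by (rule measurable_restrict) (auto simp: KK_def)
  have "integrable M (\<lambda>s. F (\<lambda>i\<in>I. Yt M B n i s)) \<longleftrightarrow> integrable (PiM I (Qd M B n)) F"
    using integrable_distr_eq[OF m1 F] unfolding D1 by simp
  also have "\<dots> \<longleftrightarrow> integrable \<Omega> (\<lambda>\<omega>. F (\<lambda>i\<in>I. \<omega> (b, i)))"
    using integrable_distr_eq[OF m2 F'] unfolding D2 by simp
  finally show ?thesis .
qed

end




definition Sfx :: "bool \<Rightarrow> nat \<Rightarrow> nat \<Rightarrow> (bool \<times> nat \<Rightarrow> real) \<Rightarrow> real" where
  "Sfx b k j \<omega> = (\<Sum>i\<in>{j<..k}. \<omega> (b, i))"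
definition Tf :: "nat \<Rightarrow> nat \<Rightarrow> (bool \<times> nat \<Rightarrow> real) \<Rightarrow> real" where
  "Tf k j \<omega> = Sfx True k j \<omega> - Sfx False k j \<omega>"
definition Gf :: "nat \<Rightarrow> (bool \<times> nat \<Rightarrow> real) \<Rightarrow> real" where
  "Gf k \<omega> = Max ((\<lambda>j. Tf k j \<omega>) ` {..k})"
definition Hx :: "nat \<Rightarrow> (bool \<times> nat \<Rightarrow> real) \<Rightarrow> real" where
  "Hx k \<omega> = Max ((\<lambda>j. Sfx True k j \<omega>) ` {..k})"

lemma integrable_Max_fin:
  fixes f :: "'i \<Rightarrow> 'a \<Rightarrow> real"
  assumes "finite S" "S \<noteq> {}" "\<And>j. j \<in> S \<Longrightarrow> integrable M (f j)"
  shows "integrable M (\<lambda>x. Max ((\<lambda>j. f j x) ` S))"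
  using assms
proof (induction S rule: finite_ne_induct)
  case (singleton j) then show ?case by simp
next
  case (insert j S)
  have "integrable M (\<lambda>x. max (f j x) (Max ((\<lambda>j. f j x) ` S)))"
    using insert by (intro integrable_max) auto
  moreover have "(\<lambda>x. Max ((\<lambda>j. f j x) ` insert j S)) = (\<lambda>x. max (f j x) (Max ((\<lambda>j. f j x) ` S)))"
    using insert by (auto simp: fun_eq_iff)
  ultimately show ?case by simp
qed

lemma (in product_sigma_finite) fold_mono:
  fixes f g :: "_ \<Rightarrow> real"
  assumes IJ: "I \<inter> J = {}" and fin: "finite I" "finite J"
    and f: "integrable (Pi\<^sub>M (I \<union> J) M) f" and g: "integrable (Pi\<^sub>M (I \<union> J) M) g"
    and le: "\<And>x. x \<in> space (Pi\<^sub>M I M) \<Longrightarrow>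
       (\<integral>y. f (merge I J (x, y)) \<partial>Pi\<^sub>M J M) \<le> (\<integral>y. g (merge I J (x, y)) \<partial>Pi\<^sub>M J M)"
  shows "integral\<^sup>L (Pi\<^sub>M (I \<union> J) M) f \<le> integral\<^sup>L (Pi\<^sub>M (I \<union> J) M) g"
proof -
  interpret I: finite_product_sigma_finite M I by standard fact
  interpret J: finite_product_sigma_finite M J by standard fact
  interpret P: pair_sigma_finite "Pi\<^sub>M I M" "Pi\<^sub>M J M" ..
  have f_int: "integrable (Pi\<^sub>M I M \<Otimes>\<^sub>M Pi\<^sub>M J M) (\<lambda>x. f (merge I J x))"
    by (rule integrable_distr[OF measurable_merge]) (simp add: distr_merge[OF IJ fin] f)
  have g_int: "integrable (Pi\<^sub>M I M \<Otimes>\<^sub>M Pi\<^sub>M J M) (\<lambda>x. g (merge I J x))"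
    by (rule integrable_distr[OF measurable_merge]) (simp add: distr_merge[OF IJ fin] g)
  have "integral\<^sup>L (Pi\<^sub>M (I \<union> J) M) f = (\<integral>x. (\<integral>y. f (merge I J (x, y)) \<partial>Pi\<^sub>M J M) \<partial>Pi\<^sub>M I M)"
    by (rule product_integral_fold[OF IJ fin f])
  also have "\<dots> \<le> (\<integral>x. (\<integral>y. g (merge I J (x, y)) \<partial>Pi\<^sub>M J M) \<partial>Pi\<^sub>M I M)"
    using P.integrable_fst'[OF f_int] P.integrable_fst'[OF g_int] le
    by (intro integral_mono_AE) (auto intro!: AE_I2)
  also have "\<dots> = integral\<^sup>L (Pi\<^sub>M (I \<union> J) M) g"
    by (rule product_integral_fold[OF IJ fin g, symmetric])
  finally show ?thesis .
qed

context sched2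
begin

lemma coord_int: "integrable \<Omega> (\<lambda>\<omega>. \<omega> \<kappa>)"
proof (cases "\<kappa> \<in> KK n")
  case True
  obtain b i where k: "\<kappa> = (b, i)" by (cases \<kappa>)
  with True have i: "i \<in> I" by (auto simp: KK_def)
  have F: "(\<lambda>v::nat \<Rightarrow> real. v i) \<in> borel_measurable (PiM I (\<lambda>_. borel))"
    using i by (rule measurable_component_singleton)
  have "integrable M (\<lambda>s. (\<lambda>v. v i) (\<lambda>i\<in>I. Yt M B n i s))"
    using i Y_int[of i] by (simp add: Yt_eq)
  then have "integrable \<Omega> (\<lambda>\<omega>. (\<lambda>v. v i) (\<lambda>i\<in>I. \<omega> (b, i)))"
    using TR_int[OF F, of b] by simp
  then show ?thesis using i k by simp
next
  case False
  interpret O: prob_space \<Omega> by (rule prob_Om)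
  have eq: "\<omega> \<kappa> = undefined" if "\<omega> \<in> space \<Omega>" for \<omega>
  proof -
    have "\<omega> \<in> (\<Pi>\<^sub>E \<kappa>\<in>KK n. UNIV)" using that by (simp only: space_Om)
    then show ?thesis using False by (rule PiE_arb)
  qed
  have "integrable \<Omega> (\<lambda>\<omega>. \<omega> \<kappa>) \<longleftrightarrow> integrable \<Omega> (\<lambda>\<omega>. undefined :: real)"
    by (rule Bochner_Integration.integrable_cong) (auto simp: eq)
  then show ?thesis by simp
qed

lemma coord_mean: "i \<in> I \<Longrightarrow> (\<integral>\<omega>. \<omega> (b, i) \<partial>\<Omega>) = 0"
proof -
  assume i: "i \<in> I"
  have F: "(\<lambda>v::nat \<Rightarrow> real. v i) \<in> borel_measurable (PiM I (\<lambda>_. borel))"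
    using i by (rule measurable_component_singleton)
  have "(\<integral>s. (\<lambda>v. v i) (\<lambda>i\<in>I. Yt M B n i s) \<partial>M) = (\<integral>\<omega>. (\<lambda>v. v i) (\<lambda>i\<in>I. \<omega> (b, i)) \<partial>\<Omega>)"
    by (rule TR[OF F])
  then show ?thesis using i Y_mean[of i] by (simp add: Yt_eq)
qed

lemma Sfx_meas[measurable]: "Sfx b k j \<in> borel_measurable \<Omega>"
  unfolding Sfx_def[abs_def] by measurable
lemma Tf_meas[measurable]: "Tf k j \<in> borel_measurable \<Omega>"
  unfolding Tf_def[abs_def] by measurable
lemma Gf_meas[measurable]: "Gf k \<in> borel_measurable \<Omega>"
  unfolding Gf_def[abs_def] by measurable
lemma Hx_meas[measurable]: "Hx k \<in> borel_measurable \<Omega>"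
  unfolding Hx_def[abs_def] by measurable

lemma Sfx_int: "integrable \<Omega> (Sfx b k j)"
  unfolding Sfx_def[abs_def] by (intro Bochner_Integration.integrable_sum coord_int)
lemma Tf_int: "integrable \<Omega> (Tf k j)"
  unfolding Tf_def[abs_def] by (intro Bochner_Integration.integrable_diff Sfx_int)
lemma Gf_int: "integrable \<Omega> (Gf k)"
  unfolding Gf_def[abs_def] by (intro integrable_Max_fin Tf_int) auto
lemma Hx_int: "integrable \<Omega> (Hx k)"
  unfolding Hx_def[abs_def] by (intro integrable_Max_fin Sfx_int) auto

end




lemma layer_cake:
  fixes h :: "'a \<Rightarrow> real"
  assumes sf: "sigma_finite_measure N" and hm[measurable]: "h \<in> borel_measurable N"
    and nonneg: "\<And>x. x \<in> space N \<Longrightarrow> 0 \<le> h x"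
  shows "(\<integral>\<^sup>+x. ennreal (h x) \<partial>N) = (\<integral>\<^sup>+t. indicator {0..} t * emeasure N {x\<in>space N. t < h x} \<partial>lborel)"
proof -
  interpret P: pair_sigma_finite N lborel
    by (intro pair_sigma_finite.intro sf) (simp add: lborel.sigma_finite_measure_axioms)
  let ?f = "\<lambda>x t. indicator {p. 0 \<le> snd p \<and> snd p < h (fst p)} (x, t) :: ennreal"
  have fm: "case_prod ?f \<in> borel_measurable (N \<Otimes>\<^sub>M lborel)" by measurable
  have "(\<integral>\<^sup>+x. ennreal (h x) \<partial>N) = (\<integral>\<^sup>+x. (\<integral>\<^sup>+t. ?f x t \<partial>lborel) \<partial>N)"
  proof (rule nn_integral_cong)
    fix x assume x: "x \<in> space N"
    have "(\<integral>\<^sup>+t. ?f x t \<partial>lborel) = (\<integral>\<^sup>+t. indicator {0..<h x} t \<partial>lborel)"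
      by (intro nn_integral_cong) (auto simp: indicator_def)
    also have "\<dots> = ennreal (h x)" using nonneg[OF x] by simp
    finally show "ennreal (h x) = (\<integral>\<^sup>+t. ?f x t \<partial>lborel)" by simp
  qed
  also have "\<dots> = (\<integral>\<^sup>+t. (\<integral>\<^sup>+x. ?f x t \<partial>N) \<partial>lborel)"
    by (rule P.Fubini'[OF fm, symmetric])
  also have "\<dots> = (\<integral>\<^sup>+t. indicator {0..} t * emeasure N {x\<in>space N. t < h x} \<partial>lborel)"
  proof (rule nn_integral_cong)
    fix t :: real
    have "(\<integral>\<^sup>+x. ?f x t \<partial>N) = (\<integral>\<^sup>+x. indicator {0..} t * indicator {x\<in>space N. t < h x} x \<partial>N)"
      by (intro nn_integral_cong) (auto simp: indicator_def)
    also have "\<dots> = indicator {0..} t * emeasure N {x\<in>space N. t < h x}"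
      by (subst nn_integral_cmult) simp_all
    finally show "(\<integral>\<^sup>+x. ?f x t \<partial>N) = indicator {0..} t * emeasure N {x\<in>space N. t < h x}" .
  qed
  finally show ?thesis .
qed

lemma expectation_le_from_tails:
  fixes g h :: "'a \<Rightarrow> real"
  assumes P: "prob_space N" and gi: "integrable N g" and hi: "integrable N h"
    and g0: "\<And>x. x \<in> space N \<Longrightarrow> 0 \<le> g x" and h0: "\<And>x. x \<in> space N \<Longrightarrow> 0 \<le> h x"
    and tail: "\<And>t. 0 \<le> t \<Longrightarrow> measure N {x\<in>space N. t < g x} \<le> c * measure N {x\<in>space N. t < h x}"
    and c: "0 \<le> c"
  shows "integral\<^sup>L N g \<le> c * integral\<^sup>L N h"
proof -
  interpret prob_space N by (rule P)
  have gm[measurable]: "g \<in> borel_measurable N" using gi by auto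
  have hm[measurable]: "h \<in> borel_measurable N" using hi by auto
  have "ennreal (integral\<^sup>L N g) = (\<integral>\<^sup>+x. ennreal (g x) \<partial>N)"
    using gi g0 by (intro nn_integral_eq_integral[symmetric]) (auto intro!: AE_I2)
  also have "\<dots> = (\<integral>\<^sup>+t. indicator {0..} t * emeasure N {x\<in>space N. t < g x} \<partial>lborel)"
    by (rule layer_cake) (auto simp: g0 sigma_finite_measure_axioms)
  also have "\<dots> \<le> (\<integral>\<^sup>+t. ennreal c * (indicator {0..} t * emeasure N {x\<in>space N. t < h x}) \<partial>lborel)"
  proof (rule nn_integral_mono)
    fix t :: real
    show "indicator {0..} t * emeasure N {x\<in>space N. t < g x} \<le> ennreal c * (indicator {0..} t * emeasure N {x\<in>space N. t < h x})"
    proof (cases "0 \<le> t")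
      case True
      have "emeasure N {x\<in>space N. t < g x} = ennreal (measure N {x\<in>space N. t < g x})"
        by (simp add: emeasure_eq_measure)
      also have "\<dots> \<le> ennreal (c * measure N {x\<in>space N. t < h x})"
        using tail[OF True] by (rule ennreal_leI)
      also have "\<dots> = ennreal c * emeasure N {x\<in>space N. t < h x}"
        using c by (simp add: emeasure_eq_measure ennreal_mult)
      finally show ?thesis using True by (simp add: indicator_def)
    qed (simp add: indicator_def)
  qed
  also have "\<dots> = ennreal c * (\<integral>\<^sup>+t. indicator {0..} t * emeasure N {x\<in>space N. t < h x} \<partial>lborel)"
    by (rule nn_integral_cmult) measurable
  also have "\<dots> = ennreal c * (\<integral>\<^sup>+x. ennreal (h x) \<partial>N)"
    by (subst layer_cake) (auto simp: h0 sigma_finite_measure_axioms)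
  also have "\<dots> = ennreal c * ennreal (integral\<^sup>L N h)"
    using hi h0 by (subst nn_integral_eq_integral) (auto intro!: AE_I2)
  also have "\<dots> = ennreal (c * integral\<^sup>L N h)"
  proof -
    have "0 \<le> integral\<^sup>L N h" using h0 by (intro integral_nonneg_AE AE_I2) auto
    then show ?thesis using c by (simp add: ennreal_mult)
  qed
  finally show ?thesis
    using c hi h0 by (subst (asm) ennreal_le_iff) (auto intro!: mult_nonneg_nonneg integral_nonneg_AE)
qed




definition Dsw :: "nat \<Rightarrow> (bool \<times> nat \<Rightarrow> real) \<Rightarrow> real" where
  "Dsw j \<omega> = (\<Sum>i\<in>{0<..j}. \<omega> (True, i) - \<omega> (False, i))"
definition sw :: "nat \<Rightarrow> bool \<times> nat \<Rightarrow> bool \<times> nat" where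
  "sw j \<kappa> = (if snd \<kappa> \<le> j then (\<not> fst \<kappa>, snd \<kappa>) else \<kappa>)"
definition phi :: "nat \<Rightarrow> nat \<Rightarrow> (bool \<times> nat \<Rightarrow> real) \<Rightarrow> (bool \<times> nat \<Rightarrow> real)" where
  "phi n j \<omega> = (\<lambda>\<kappa>\<in>KK n. \<omega> (sw j \<kappa>))"

lemma sw_snd[simp]: "snd (sw j \<kappa>) = snd \<kappa>"
  by (simp add: sw_def)

lemma sw_inj: "inj_on (sw j) A"
  by (auto simp: inj_on_def sw_def split: if_splits simp: prod_eq_iff)

lemma sw_KK: "sw j \<in> KK n \<rightarrow> KK n"
  by (auto simp: sw_def KK_def)

lemma Tf_split: "j \<le> k \<Longrightarrow> Tf k 0 \<omega> = Dsw j \<omega> + Tf k j \<omega>"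
proof -
  assume jk: "j \<le> k"
  have u: "{0<..k} = {0<..j} \<union> {j<..k}" using jk by auto
  have "Sfx b k 0 \<omega> = (\<Sum>i\<in>{0<..j}. \<omega> (b, i)) + Sfx b k j \<omega>" for b
    unfolding Sfx_def u by (rule sum.union_disjoint) auto
  then show ?thesis
    by (simp add: Tf_def Dsw_def sum_subtractf)
qed

lemma Tf_self: "Tf k k \<omega> = 0"
  by (simp add: Tf_def Sfx_def)

lemma Gf_nonneg: "0 \<le> Gf k \<omega>"
proof -
  have "Tf k k \<omega> \<le> Gf k \<omega>" unfolding Gf_def by (intro Max_ge) auto
  then show ?thesis by (simp add: Tf_self)
qed

context sched2
begin

lemma Dsw_meas[measurable]: "Dsw j \<in> borel_measurable \<Omega>"
  unfolding Dsw_def[abs_def] by measurable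

lemma phi_meas: "phi n j \<in> measurable \<Omega> \<Omega>"
proof -
  have "(\<lambda>\<omega>. \<lambda>\<kappa>\<in>KK n. \<omega> (sw j \<kappa>)) \<in> measurable \<Omega> (PiM (KK n) (\<lambda>\<kappa>. Qd M B n (snd \<kappa>)))"
  proof (rule measurable_restrict)
    fix \<kappa> assume "\<kappa> \<in> KK n"
    show "(\<lambda>\<omega>. \<omega> (sw j \<kappa>)) \<in> measurable \<Omega> (Qd M B n (snd \<kappa>))"
      using coord_meas[of "sw j \<kappa>"] by (simp only: meas_to_Qd)
  qed
  then show ?thesis unfolding phi_def[abs_def] Om_def .
qed

lemma phi_distr: "distr \<Omega> \<Omega> (phi n j) = \<Omega>"
  using distr_PiM_reindex[of "KK n" "\<lambda>\<kappa>. Qd M B n (snd \<kappa>)" "sw j" "KK n"]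
  unfolding Om_def phi_def[abs_def] by (simp add: Qd_prob sw_inj sw_KK)

lemma measure_phi: "S \<in> sets \<Omega> \<Longrightarrow> measure \<Omega> S = measure \<Omega> (phi n j -` S \<inter> space \<Omega>)"
  using measure_distr[OF phi_meas, of S j] by (simp add: phi_distr)

lemma Tf_phi: "k \<le> n \<Longrightarrow> j \<le> l \<Longrightarrow> Tf k l (phi n j \<omega>) = Tf k l \<omega>"
proof -
  assume kn: "k \<le> n" and jl: "j \<le> l"
  have "Sfx b k l (phi n j \<omega>) = Sfx b k l \<omega>" for b
    unfolding Sfx_def phi_def using kn jl
    by (intro sum.cong refl) (auto simp: KK_def sw_def)
  then show ?thesis by (simp add: Tf_def)
qed

lemma Dsw_phi: "j \<le> n \<Longrightarrow> Dsw j (phi n j \<omega>) = - Dsw j \<omega>"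
proof -
  assume jn: "j \<le> n"
  have "Dsw j (phi n j \<omega>) = (\<Sum>i\<in>{0<..j}. \<omega> (False, i) - \<omega> (True, i))"
    unfolding Dsw_def phi_def using jn
    by (intro sum.cong refl) (auto simp: KK_def sw_def)
  also have "\<dots> = - Dsw j \<omega>"
    unfolding Dsw_def by (simp add: sum_negf[symmetric])
  finally show ?thesis .
qed

end




context sched2
begin

lemma levy_tail:
  assumes kn: "k \<le> n" and t: "0 \<le> t"
  shows "measure \<Omega> {\<omega>\<in>space \<Omega>. t < Gf k \<omega>} \<le> 2 * measure \<Omega> {\<omega>\<in>space \<Omega>. t < max 0 (Tf k 0 \<omega>)}"
proof -
  interpret O: prob_space \<Omega> by (rule prob_Om)
  define A where "A j = {\<omega>\<in>space \<Omega>. t < Tf k j \<omega> \<and> (\<forall>l\<in>{j<..k}. Tf k l \<omega> \<le> t)}" for j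
  define E where "E j = {\<omega>\<in>space \<Omega>. (t < Tf k j \<omega> \<and> (\<forall>l\<in>{j<..k}. Tf k l \<omega> \<le> t)) \<and> 0 \<le> Dsw j \<omega>}" for j
  define E' where "E' j = {\<omega>\<in>space \<Omega>. (t < Tf k j \<omega> \<and> (\<forall>l\<in>{j<..k}. Tf k l \<omega> \<le> t)) \<and> Dsw j \<omega> \<le> 0}" for j
  have A_sets[measurable]: "A j \<in> sets \<Omega>" for j unfolding A_def by measurable
  have E_sets[measurable]: "E j \<in> sets \<Omega>" for j unfolding E_def by measurable
  have E'_sets[measurable]: "E' j \<in> sets \<Omega>" for j unfolding E'_def by measurable
  have U: "{\<omega>\<in>space \<Omega>. t < Gf k \<omega>} = (\<Union>j\<in>{..<k}. A j)"
  proof (intro equalityI subsetI)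
    fix \<omega> assume "\<omega> \<in> {\<omega>\<in>space \<Omega>. t < Gf k \<omega>}"
    then have sp: "\<omega> \<in> space \<Omega>" and lt: "t < Gf k \<omega>" by auto
    let ?J = "{j\<in>{..k}. t < Tf k j \<omega>}"
    have "\<exists>j\<in>{..k}. t < Tf k j \<omega>"
      using lt unfolding Gf_def by (subst (asm) Max_gr_iff) auto
    then have ne: "?J \<noteq> {}" by auto
    have fin: "finite ?J" by auto
    define m where "m = Max ?J"
    have mJ: "m \<in> ?J" unfolding m_def by (rule Max_in[OF fin ne])
    have mk: "m < k"
    proof -
      have "m \<le> k" using mJ by auto
      moreover have "m \<noteq> k" using mJ t by (auto simp: Tf_self)
      ultimately show ?thesis by simp
    qed
    have "\<forall>l\<in>{m<..k}. Tf k l \<omega> \<le> t"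
    proof
      fix l assume l: "l \<in> {m<..k}"
      show "Tf k l \<omega> \<le> t"
      proof (rule ccontr)
        assume "\<not> Tf k l \<omega> \<le> t"
        then have "l \<in> ?J" using l by auto
        then have "l \<le> m" unfolding m_def by (rule Max_ge[OF fin])
        with l show False by simp
      qed
    qed
    then have "\<omega> \<in> A m" using sp mJ unfolding A_def by auto
    then show "\<omega> \<in> (\<Union>j\<in>{..<k}. A j)" using mk by auto
  next
    fix \<omega> assume "\<omega> \<in> (\<Union>j\<in>{..<k}. A j)"
    then obtain j where j: "j < k" "\<omega> \<in> A j" by auto
    have "Tf k j \<omega> \<le> Gf k \<omega>" unfolding Gf_def using j by (intro Max_ge) auto
    then show "\<omega> \<in> {\<omega>\<in>space \<Omega>. t < Gf k \<omega>}" using j unfolding A_def by auto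
  qed
  have dA: "disjoint_family_on A {..<k}"
  proof (unfold disjoint_family_on_def, intro ballI impI)
    fix j j' assume j: "j \<in> {..<k}" "j' \<in> {..<k}" "j \<noteq> j'"
    show "A j \<inter> A j' = {}"
    proof (cases "j < j'")
      case True then show ?thesis using j unfolding A_def by force
    next
      case False then have "j' < j" using j by simp
      then show ?thesis using j unfolding A_def by force
    qed
  qed
  have dE: "disjoint_family_on E {..<k}"
    using dA unfolding disjoint_family_on_def A_def E_def by blast
  have sym: "measure \<Omega> (E' j) = measure \<Omega> (E j)" if j: "j < k" for j
  proof -
    have "phi n j -` E j \<inter> space \<Omega> = E' j"
    proof (intro equalityI subsetI)
      fix \<omega> assume w: "\<omega> \<in> phi n j -` E j \<inter> space \<Omega>"
      then have sp: "\<omega> \<in> space \<Omega>" by auto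
      have "\<forall>l\<in>{j<..k}. Tf k l (phi n j \<omega>) = Tf k l \<omega>" using kn by (auto intro!: Tf_phi)
      then show "\<omega> \<in> E' j" using w sp kn j unfolding E_def E'_def by (auto simp: Tf_phi Dsw_phi)
    next
      fix \<omega> assume w: "\<omega> \<in> E' j"
      then have sp: "\<omega> \<in> space \<Omega>" unfolding E'_def by auto
      have sp': "phi n j \<omega> \<in> space \<Omega>" using measurable_space[OF phi_meas sp] .
      have "\<forall>l\<in>{j<..k}. Tf k l (phi n j \<omega>) = Tf k l \<omega>" using kn by (auto intro!: Tf_phi)
      then show "\<omega> \<in> phi n j -` E j \<inter> space \<Omega>" using w sp sp' kn j unfolding E_def E'_def by (auto simp: Tf_phi Dsw_phi)
    qed
    then show ?thesis using measure_phi[of "E j" j] by simp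
  qed
  have Aj: "measure \<Omega> (A j) \<le> 2 * measure \<Omega> (E j)" if j: "j < k" for j
  proof -
    have "A j = E j \<union> E' j" unfolding A_def E_def E'_def by auto
    then have "measure \<Omega> (A j) \<le> measure \<Omega> (E j) + measure \<Omega> (E' j)"
      by (simp add: measure_subadditive O.emeasure_finite)
    then show ?thesis using sym[OF j] by simp
  qed
  have Esub: "(\<Union>j\<in>{..<k}. E j) \<subseteq> {\<omega>\<in>space \<Omega>. t < max 0 (Tf k 0 \<omega>)}"
  proof
    fix \<omega> assume "\<omega> \<in> (\<Union>j\<in>{..<k}. E j)"
    then obtain j where j: "j < k" "\<omega> \<in> E j" by auto
    then have "Tf k 0 \<omega> = Dsw j \<omega> + Tf k j \<omega>" by (intro Tf_split) simp
    then show "\<omega> \<in> {\<omega>\<in>space \<Omega>. t < max 0 (Tf k 0 \<omega>)}" using j unfolding E_def by auto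
  qed
  have "measure \<Omega> {\<omega>\<in>space \<Omega>. t < Gf k \<omega>} = (\<Sum>j\<in>{..<k}. measure \<Omega> (A j))"
    unfolding U by (rule O.finite_measure_finite_Union) (auto simp: dA)
  also have "\<dots> \<le> (\<Sum>j\<in>{..<k}. 2 * measure \<Omega> (E j))"
    by (intro sum_mono Aj) simp
  also have "\<dots> = 2 * measure \<Omega> (\<Union>j\<in>{..<k}. E j)"
    by (subst O.finite_measure_finite_Union) (auto simp: dE sum_distrib_left)
  also have "\<dots> \<le> 2 * measure \<Omega> {\<omega>\<in>space \<Omega>. t < max 0 (Tf k 0 \<omega>)}"
    using Esub by (intro mult_left_mono O.finite_measure_mono) auto
  finally show ?thesis .
qed

lemma U2: "k \<le> n \<Longrightarrow> (\<integral>\<omega>. Gf k \<omega> \<partial>\<Omega>) \<le> 2 * (\<integral>\<omega>. max 0 (Tf k 0 \<omega>) \<partial>\<Omega>)"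
  by (rule expectation_le_from_tails[OF prob_Om Gf_int])
     (auto intro!: integrable_max Tf_int levy_tail simp: Gf_nonneg)

end




context sched2
begin

abbreviation "KT \<equiv> {True} \<times> I"
abbreviation "KF \<equiv> {False} \<times> I"
abbreviation "Q2 \<equiv> (\<lambda>\<kappa>::bool\<times>nat. Qd M B n (snd \<kappa>))"

lemma Om_split: "\<Omega> = PiM (KT \<union> KF) Q2"
proof -
  have "KK n = KT \<union> KF" unfolding KK_def UNIV_bool by auto
  then show ?thesis unfolding Om_def by simp
qed

lemma PF_coord:
  assumes i: "i \<in> I"
  shows "integrable (PiM KF Q2) (\<lambda>y. y (False, i))" "(\<integral>y. y (False, i) \<partial>PiM KF Q2) = 0"
proof -
  have D: "distr (PiM KF Q2) (Q2 (False, i)) (\<lambda>y. y (False, i)) = Q2 (False, i)"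
    using i by (intro distr_PiM_component Qd_prob) auto
  have m1: "(\<lambda>y. y (False, i)) \<in> measurable (PiM KF Q2) (Q2 (False, i))"
    using i by (intro measurable_component_singleton) auto
  have m2: "(\<lambda>v::real. v) \<in> borel_measurable (Q2 (False, i))" by (subst meas_from_Qd) simp
  have "integrable (PiM KF Q2) (\<lambda>y. y (False, i)) \<longleftrightarrow> integrable (Q2 (False, i)) (\<lambda>v. v)"
    using integrable_distr_eq[OF m1 m2] unfolding D by simp
  also have "\<dots> \<longleftrightarrow> integrable M (Yt M B n i)"
    unfolding Qd_def by (subst integrable_distr_eq) simp_all
  finally show "integrable (PiM KF Q2) (\<lambda>y. y (False, i))" using i Y_int[of i] by (simp add: Yt_eq)
  have "(\<integral>y. y (False, i) \<partial>PiM KF Q2) = (\<integral>v. v \<partial>Q2 (False, i))"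
    using integral_distr[OF m1 m2] unfolding D by simp
  also have "\<dots> = (\<integral>s. Yt M B n i s \<partial>M)"
    unfolding Qd_def by (subst integral_distr) simp_all
  finally show "(\<integral>y. y (False, i) \<partial>PiM KF Q2) = 0" using i Y_mean[of i] by (simp add: Yt_eq)
qed

lemma U1:
  assumes kn: "k \<le> n"
  shows "(\<integral>\<omega>. Hx k \<omega> \<partial>\<Omega>) \<le> (\<integral>\<omega>. Gf k \<omega> \<partial>\<Omega>)"
proof -
  interpret PS: product_prob_space Q2 "UNIV :: (bool \<times> nat) set" by (rule product_prob_spaceI) (rule Qd_prob)
  interpret PF: prob_space "PiM KF Q2" by (intro prob_space_PiM Qd_prob)
  have dj: "KT \<inter> KF = {}" by auto
  have "integral\<^sup>L (PiM (KT \<union> KF) Q2) (Hx k) \<le> integral\<^sup>L (PiM (KT \<union> KF) Q2) (Gf k)"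
  proof (rule PS.fold_mono[OF dj])
    show "integrable (PiM (KT \<union> KF) Q2) (Hx k)" using Hx_int Om_split by simp
    show "integrable (PiM (KT \<union> KF) Q2) (Gf k)" using Gf_int Om_split by simp
    fix x
    let ?c = "\<lambda>j. Sfx True k j x"
    have Hm: "Hx k (merge KT KF (x, y)) = Hx k x" for y
      unfolding Hx_def Sfx_def using kn
      by (intro arg_cong[where f=Max] image_cong refl sum.cong) (auto simp: merge_def)
    have Gm: "Gf k (merge KT KF (x, y)) = Max ((\<lambda>j. ?c j - Sfx False k j y) ` {..k})" for y
      unfolding Gf_def Tf_def Sfx_def using kn
      by (intro arg_cong[where f=Max] image_cong refl arg_cong2[where f=minus] sum.cong) (auto simp: merge_def)
    have SF_int: "integrable (PiM KF Q2) (Sfx False k j)" for j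
      unfolding Sfx_def[abs_def]
    proof (rule Bochner_Integration.integrable_sum)
      fix i assume "i \<in> {j<..k}"
      then have "i \<in> {1..n}" using kn by auto
      then show "integrable (PiM KF Q2) (\<lambda>y. y (False, i))" by (rule PF_coord(1))
    qed
    have SF_0: "(\<integral>y. Sfx False k j y \<partial>PiM KF Q2) = 0" for j
    proof -
      have z: "(\<integral>y. y (False, i) \<partial>PiM KF Q2) = 0" if "i \<in> {j<..k}" for i
      proof -
        have "i \<in> {1..n}" using that kn by auto
        then show ?thesis by (rule PF_coord(2))
      qed
      have ii: "integrable (PiM KF Q2) (\<lambda>y. y (False, i))" if "i \<in> {j<..k}" for i
      proof -
        have "i \<in> {1..n}" using that kn by auto
        then show ?thesis by (rule PF_coord(1))
      qed
      have "(\<integral>y. (\<Sum>i\<in>{j<..k}. y (False, i)) \<partial>PiM KF Q2) = (\<Sum>i\<in>{j<..k}. \<integral>y. y (False, i) \<partial>PiM KF Q2)"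
        by (rule Bochner_Integration.integral_sum) (rule ii)
      also have "\<dots> = 0" by (intro sum.neutral ballI z)
      finally show ?thesis unfolding Sfx_def .
    qed
    have Gint: "integrable (PiM KF Q2) (\<lambda>y. Max ((\<lambda>j. ?c j - Sfx False k j y) ` {..k}))"
      by (intro integrable_Max_fin Bochner_Integration.integrable_diff SF_int PF.integrable_const) auto
    have "Hx k x \<le> (\<integral>y. Gf k (merge KT KF (x, y)) \<partial>PiM KF Q2)"
      unfolding Gm Hx_def
    proof (subst Max_le_iff, simp, simp, intro ballI)
      fix a assume "a \<in> (\<lambda>j. ?c j) ` {..k}"
      then obtain j where j: "j \<le> k" "a = ?c j" by auto
      have "?c j = (\<integral>y. ?c j - Sfx False k j y \<partial>PiM KF Q2)"
        using Bochner_Integration.integral_diff[OF PF.integrable_const SF_int, of "?c j" j] SF_0[of j] PF.prob_space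
        by simp
      also have "\<dots> \<le> (\<integral>y. Max ((\<lambda>j. ?c j - Sfx False k j y) ` {..k}) \<partial>PiM KF Q2)"
        using j by (intro integral_mono Gint Bochner_Integration.integrable_diff SF_int PF.integrable_const Max_ge) auto
      finally show "a \<le> (\<integral>y. Max ((\<lambda>j. ?c j - Sfx False k j y) ` {..k}) \<partial>PiM KF Q2)" using j by simp
    qed
    then show "(\<integral>y. Hx k (merge KT KF (x, y)) \<partial>PiM KF Q2) \<le> (\<integral>y. Gf k (merge KT KF (x, y)) \<partial>PiM KF Q2)"
      unfolding Hm using PF.prob_space by simp
  qed auto
  then show ?thesis using Om_split by simp
qed

lemma comp_meas: "i \<in> I \<Longrightarrow> (\<lambda>v::nat\<Rightarrow>real. v i) \<in> borel_measurable (PiM I (\<lambda>_. borel))"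
  by (rule measurable_component_singleton)

lemma TRsum:
  assumes kn: "k \<le> n"
  shows "(\<integral>\<omega>. max 0 (Sfx b k 0 \<omega>) \<partial>\<Omega>) = (\<integral>s. max 0 (\<Sum>i\<in>{0<..k}. Y i s) \<partial>M)"
proof -
  let ?F = "\<lambda>v::nat\<Rightarrow>real. max 0 (\<Sum>i\<in>{0<..k}. v i)"
  have F: "?F \<in> borel_measurable (PiM I (\<lambda>_. borel))"
    using kn by (intro borel_measurable_max borel_measurable_const borel_measurable_sum comp_meas) auto
  have "(\<integral>s. ?F (\<lambda>i\<in>I. Yt M B n i s) \<partial>M) = (\<integral>\<omega>. ?F (\<lambda>i\<in>I. \<omega> (b, i)) \<partial>\<Omega>)"
    by (rule TR[OF F])
  moreover have "?F (\<lambda>i\<in>I. Yt M B n i s) = max 0 (\<Sum>i\<in>{0<..k}. Y i s)" for s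
    using kn by (intro arg_cong2[where f=max] refl sum.cong) (auto simp: Yt_eq)
  moreover have "?F (\<lambda>i\<in>I. \<omega> (b, i)) = max 0 (Sfx b k 0 \<omega>)" for \<omega>
    unfolding Sfx_def using kn by (intro arg_cong2[where f=max] refl sum.cong) auto
  ultimately show ?thesis by simp
qed

lemma TRmax:
  assumes kn: "k \<le> n"
  shows "(\<integral>\<omega>. Hx k \<omega> \<partial>\<Omega>) = (\<integral>s. Max ((\<lambda>j. \<Sum>i\<in>{j<..k}. Y i s) ` {..k}) \<partial>M)"
proof -
  let ?F = "\<lambda>v::nat\<Rightarrow>real. Max ((\<lambda>j. \<Sum>i\<in>{j<..k}. v i) ` {..k})"
  have F: "?F \<in> borel_measurable (PiM I (\<lambda>_. borel))"
    using kn by (intro borel_measurable_Max borel_measurable_sum comp_meas) auto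
  have "(\<integral>s. ?F (\<lambda>i\<in>I. Yt M B n i s) \<partial>M) = (\<integral>\<omega>. ?F (\<lambda>i\<in>I. \<omega> (True, i)) \<partial>\<Omega>)"
    by (rule TR[OF F])
  moreover have "?F (\<lambda>i\<in>I. Yt M B n i s) = Max ((\<lambda>j. \<Sum>i\<in>{j<..k}. Y i s) ` {..k})" for s
    using kn by (intro arg_cong[where f=Max] image_cong refl sum.cong) (auto simp: Yt_eq)
  moreover have "?F (\<lambda>i\<in>I. \<omega> (True, i)) = Hx k \<omega>" for \<omega>
    unfolding Hx_def Sfx_def using kn by (intro arg_cong[where f=Max] image_cong refl sum.cong) auto
  ultimately show ?thesis by simp
qed

lemma U3:
  assumes kn: "k \<le> n"
  shows "(\<integral>\<omega>. max 0 (Tf k 0 \<omega>) \<partial>\<Omega>) \<le> 2 * (\<integral>s. max 0 (\<Sum>i\<in>{0<..k}. Y i s) \<partial>M)"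
proof -
  interpret O: prob_space \<Omega> by (rule prob_Om)
  have i1: "integrable \<Omega> (\<lambda>\<omega>. max 0 (Sfx b k 0 \<omega>))" for b by (intro integrable_max Sfx_int) auto
  have m0: "(\<integral>\<omega>. Sfx False k 0 \<omega> \<partial>\<Omega>) = 0"
  proof -
    have "\<forall>i\<in>{0<..k}. (\<integral>\<omega>. \<omega> (False, i) \<partial>\<Omega>) = 0" using kn by (auto intro!: coord_mean)
    then show ?thesis unfolding Sfx_def by (subst Bochner_Integration.integral_sum) (auto intro!: coord_int)
  qed
  have "(\<integral>\<omega>. max 0 (Tf k 0 \<omega>) \<partial>\<Omega>) \<le> (\<integral>\<omega>. max 0 (Sfx True k 0 \<omega>) + max 0 (Sfx False k 0 \<omega>) - Sfx False k 0 \<omega> \<partial>\<Omega>)"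
    by (intro integral_mono integrable_max Tf_int Bochner_Integration.integrable_diff Bochner_Integration.integrable_add i1 Sfx_int)
       (auto simp: Tf_def)
  also have "\<dots> = (\<integral>\<omega>. max 0 (Sfx True k 0 \<omega>) \<partial>\<Omega>) + (\<integral>\<omega>. max 0 (Sfx False k 0 \<omega>) \<partial>\<Omega>) - (\<integral>\<omega>. Sfx False k 0 \<omega> \<partial>\<Omega>)"
    by (simp add: Bochner_Integration.integral_diff Bochner_Integration.integral_add i1 Sfx_int Bochner_Integration.integrable_add)
  also have "\<dots> = 2 * (\<integral>s. max 0 (\<Sum>i\<in>{0<..k}. Y i s) \<partial>M)"
    using m0 TRsum[OF kn, of True] TRsum[OF kn, of False] by simp
  finally show ?thesis .
qed

lemma upper_bound:
  assumes kn: "k \<le> n"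
  shows "(\<integral>s. Max ((\<lambda>j. \<Sum>i\<in>{j<..k}. Y i s) ` {..k}) \<partial>M) \<le> 4 * (\<integral>s. max 0 (\<Sum>i\<in>{0<..k}. Y i s) \<partial>M)"
  using TRmax[OF kn] U1[OF kn] U2[OF kn] U3[OF kn] by linarith

end




context sched2
begin

lemma wait_int: "(\<And>i. i \<in> {1..k} \<Longrightarrow> \<tau> i \<in> I) \<Longrightarrow> integrable M (wait \<tau> x B k)"
proof (induction k)
  case 0 then show ?case by simp
next
  case (Suc k)
  have ih: "integrable M (wait \<tau> x B k)" using Suc by auto
  have "\<tau> (Suc k) \<in> I" using Suc.prems by auto
  then have "integrable M (B (\<tau> (Suc k)))" by (rule intB)
  then have "integrable M (\<lambda>s. max 0 (wait \<tau> x B k s + B (\<tau> (Suc k)) s - x (\<tau> (Suc k))))"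
    using ih by (intro integrable_max Bochner_Integration.integrable_diff Bochner_Integration.integrable_add) auto
  then show ?case by (simp add: wait.simps(2)[abs_def])
qed

lemma mean_sched_Y: "B j s - mean_sched M B j = Y j s"
  by (simp add: mean_sched_def cen_def)

lemma per_k:
  assumes \<tau>: "\<tau> permutes I" and kn: "k \<le> n"
  shows "(\<integral>s. wait id (mean_sched M B) B k s \<partial>M) \<le> 4 * (\<integral>s. wait \<tau> (mean_sched M B) B k s \<partial>M)"
proof -
  have tI: "\<tau> i \<in> I" if "i \<in> {1..k}" for i
    using that kn permutes_in_image[OF \<tau>] by auto
  have injt: "inj_on \<tau> {1..k}" using permutes_inj[OF \<tau>] by (auto intro: inj_on_subset)
  have "(\<integral>s. wait id (mean_sched M B) B k s \<partial>M) = (\<integral>s. Max ((\<lambda>j. \<Sum>i\<in>{j<..k}. Y i s) ` {..k}) \<partial>M)"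
    by (intro Bochner_Integration.integral_cong refl) (simp add: wait_Max mean_sched_Y)
  also have "\<dots> \<le> 4 * (\<integral>s. max 0 (\<Sum>i\<in>{0<..k}. Y i s) \<partial>M)"
    by (rule upper_bound[OF kn])
  also have "(\<integral>s. max 0 (\<Sum>i\<in>{0<..k}. Y i s) \<partial>M) = (\<integral>s. max 0 (\<Sum>i\<in>{1..k}. Y i s) \<partial>M)"
  proof -
    have "{0<..k} = {1..k}" by auto
    then show ?thesis by simp
  qed
  also have "(\<integral>s. max 0 (\<Sum>i\<in>{1..k}. Y i s) \<partial>M) \<le> (\<integral>s. max 0 (\<Sum>l\<in>\<tau> ` {1..k}. Y l s) \<partial>M)"
    using tI injt by (intro swap_set) (auto simp: card_image)
  also have "\<dots> = (\<integral>s. max 0 (\<Sum>i\<in>{1..k}. Y (\<tau> i) s) \<partial>M)"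
    using injt by (simp add: sum.reindex)
  also have "\<dots> \<le> (\<integral>s. wait \<tau> (mean_sched M B) B k s \<partial>M)"
  proof (rule integral_mono)
    show "integrable M (\<lambda>s. max 0 (\<Sum>i\<in>{1..k}. Y (\<tau> i) s))"
      using tI by (intro integrable_max Bochner_Integration.integrable_sum Y_int) auto
    show "integrable M (wait \<tau> (mean_sched M B) B k)" using tI by (intro wait_int) auto
    fix s
    have "(\<Sum>i\<in>{0<..k}. B (\<tau> i) s - mean_sched M B (\<tau> i)) \<le> wait \<tau> (mean_sched M B) B k s"
      by (rule wait_ge_sum)
    moreover have "{0<..k} = {1..k}" by auto
    ultimately show "max 0 (\<Sum>i\<in>{1..k}. Y (\<tau> i) s) \<le> wait \<tau> (mean_sched M B) B k s"
      using wait_nonneg[of \<tau> "mean_sched M B" B k s] by (simp add: mean_sched_Y)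
  qed
  finally show ?thesis by (simp add: id_def)
qed

lemma idle_telescope:
  assumes \<tau>: "\<tau> permutes I" and mn: "m < n"
  shows "(\<Sum>k\<le>m. \<integral>s. idle \<tau> (mean_sched M B) B k s \<partial>M) = (\<integral>s. wait \<tau> (mean_sched M B) B m s \<partial>M)"
  using mn
proof (induction m)
  case 0 then show ?case by simp
next
  case (Suc m)
  let ?x = "mean_sched M B"
  have tI: "\<tau> i \<in> I" if "i \<in> {1..Suc m}" for i
    using that Suc.prems permutes_in_image[OF \<tau>] by auto
  have j: "\<tau> (Suc m) \<in> I" using tI by auto
  have wi1: "integrable M (wait \<tau> ?x B (Suc m))" using tI by (intro wait_int) auto
  have wi0: "integrable M (wait \<tau> ?x B m)" using tI by (intro wait_int) auto
  have Yi: "integrable M (Y (\<tau> (Suc m)))" using j by (rule Y_int)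
  have eq: "idle \<tau> ?x B (Suc m) s = wait \<tau> ?x B (Suc m) s - wait \<tau> ?x B m s - Y (\<tau> (Suc m)) s" for s
    using wait_idle[of \<tau> ?x B m s] by (simp add: mean_sched_Y[symmetric])
  have "(\<integral>s. idle \<tau> ?x B (Suc m) s \<partial>M) = (\<integral>s. wait \<tau> ?x B (Suc m) s - wait \<tau> ?x B m s - Y (\<tau> (Suc m)) s \<partial>M)"
    by (rule Bochner_Integration.integral_cong[OF refl]) (rule eq)
  also have "\<dots> = (\<integral>s. wait \<tau> ?x B (Suc m) s \<partial>M) - (\<integral>s. wait \<tau> ?x B m s \<partial>M) - (\<integral>s. Y (\<tau> (Suc m)) s \<partial>M)"
    by (simp only: Bochner_Integration.integral_diff[OF Bochner_Integration.integrable_diff[OF wi1 wi0] Yi]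
        Bochner_Integration.integral_diff[OF wi1 wi0])
  also have "(\<integral>s. Y (\<tau> (Suc m)) s \<partial>M) = 0" using j by (rule Y_mean)
  finally have step: "(\<integral>s. idle \<tau> ?x B (Suc m) s \<partial>M) = (\<integral>s. wait \<tau> ?x B (Suc m) s \<partial>M) - (\<integral>s. wait \<tau> ?x B m s \<partial>M)"
    by simp
  have IH: "(\<Sum>k\<le>m. \<integral>s. idle \<tau> ?x B k s \<partial>M) = (\<integral>s. wait \<tau> ?x B m s \<partial>M)"
    using Suc.IH Suc.prems by simp
  have "(\<Sum>k\<le>Suc m. \<integral>s. idle \<tau> ?x B k s \<partial>M) = (\<Sum>k\<le>m. \<integral>s. idle \<tau> ?x B k s \<partial>M) + (\<integral>s. idle \<tau> ?x B (Suc m) s \<partial>M)"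
    by (rule sum.atMost_Suc)
  then show ?case using IH step by linarith
qed

lemma cost_eq:
  assumes \<tau>: "\<tau> permutes I"
  shows "cost M B n \<tau> (mean_sched M B) w = w * (\<integral>s. wait \<tau> (mean_sched M B) B (n - 1) s \<partial>M)
     + (1 - w) * (\<Sum>k\<le>n - 1. \<integral>s. wait \<tau> (mean_sched M B) B k s \<partial>M)"
proof -
  have sh: "(\<Sum>i=1..n. f (i - 1)) = (\<Sum>k\<le>n - 1. f k)" for f :: "nat \<Rightarrow> real"
  proof -
    obtain n' where n': "n = Suc n'" using n_pos by (cases n) auto
    have "(\<Sum>i=Suc 0..Suc n'. f (i - 1)) = (\<Sum>i=0..n'. f (Suc i - 1))"
      by (rule sum.shift_bounds_cl_Suc_ivl)
    then show ?thesis unfolding n' by (simp add: atLeast0AtMost)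
  qed
  have e1: "(\<Sum>i=1..n. \<integral>s. idle \<tau> (mean_sched M B) B (i - 1) s \<partial>M) = (\<Sum>k\<le>n - 1. \<integral>s. idle \<tau> (mean_sched M B) B k s \<partial>M)"
    using sh[of "\<lambda>k. \<integral>s. idle \<tau> (mean_sched M B) B k s \<partial>M"] by simp
  have e2: "(\<Sum>i=1..n. \<integral>s. wait \<tau> (mean_sched M B) B (i - 1) s \<partial>M) = (\<Sum>k\<le>n - 1. \<integral>s. wait \<tau> (mean_sched M B) B k s \<partial>M)"
    using sh[of "\<lambda>k. \<integral>s. wait \<tau> (mean_sched M B) B k s \<partial>M"] by simp
  have e3: "(\<Sum>k\<le>n - 1. \<integral>s. idle \<tau> (mean_sched M B) B k s \<partial>M) = (\<integral>s. wait \<tau> (mean_sched M B) B (n - 1) s \<partial>M)"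
    using n_pos by (intro idle_telescope[OF \<tau>]) simp
  show ?thesis
    unfolding cost_def e1 e2 e3 ..
qed

lemma wait_int_nonneg: "0 \<le> (\<integral>s. wait \<tau> x B k s \<partial>M)"
  by (rule integral_nonneg_AE) (rule AE_I2, rule wait_nonneg)

lemma cost_nonneg:
  assumes \<tau>: "\<tau> permutes I" and w: "0 \<le> w" "w \<le> 1"
  shows "0 \<le> cost M B n \<tau> (mean_sched M B) w"
proof -
  have a: "0 \<le> w * (\<integral>s. wait \<tau> (mean_sched M B) B (n - 1) s \<partial>M)"
    using w(1) wait_int_nonneg by (rule mult_nonneg_nonneg)
  have "0 \<le> (\<Sum>k\<le>n - 1. \<integral>s. wait \<tau> (mean_sched M B) B k s \<partial>M)"
    by (rule sum_nonneg) (rule wait_int_nonneg)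
  then have b: "0 \<le> (1 - w) * (\<Sum>k\<le>n - 1. \<integral>s. wait \<tau> (mean_sched M B) B k s \<partial>M)"
    using w(2) by simp
  show ?thesis unfolding cost_eq[OF \<tau>] using a b by linarith
qed

lemma cost_le:
  assumes \<tau>: "\<tau> permutes I" and w: "0 \<le> w" "w \<le> 1"
  shows "cost M B n id (mean_sched M B) w \<le> 4 * cost M B n \<tau> (mean_sched M B) w"
proof -
  have idp: "id permutes I" by (rule permutes_id)
  have a: "(\<integral>s. wait id (mean_sched M B) B (n - 1) s \<partial>M) \<le> 4 * (\<integral>s. wait \<tau> (mean_sched M B) B (n - 1) s \<partial>M)"
    by (rule per_k[OF \<tau>]) simp
  have b: "(\<Sum>k\<le>n - 1. \<integral>s. wait id (mean_sched M B) B k s \<partial>M) \<le> 4 * (\<Sum>k\<le>n - 1. \<integral>s. wait \<tau> (mean_sched M B) B k s \<partial>M)"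
    unfolding sum_distrib_left by (intro sum_mono per_k[OF \<tau>]) auto
  have "w * (\<integral>s. wait id (mean_sched M B) B (n - 1) s \<partial>M) \<le> w * (4 * (\<integral>s. wait \<tau> (mean_sched M B) B (n - 1) s \<partial>M))"
    by (rule mult_left_mono[OF a w(1)])
  moreover have "(1 - w) * (\<Sum>k\<le>n - 1. \<integral>s. wait id (mean_sched M B) B k s \<partial>M) \<le> (1 - w) * (4 * (\<Sum>k\<le>n - 1. \<integral>s. wait \<tau> (mean_sched M B) B k s \<partial>M))"
    using b w by (intro mult_left_mono) auto
  ultimately show ?thesis
    unfolding cost_eq[OF \<tau>] cost_eq[OF idp] by (simp add: algebra_simps)
qed

end

theorem theorem3p2:
  fixes M :: "'a measure" and B :: "nat \<Rightarrow> 'a \<Rightarrow> real" and n :: nat and w :: real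
  assumes "prob_space M"
    and "n \<ge> 1"
    and "prob_space.indep_vars M (\<lambda>_. borel) B {1..n}"
    and "\<And>i. i \<in> {1..n} \<Longrightarrow> integrable M (B i)"
    and "\<And>i. i \<in> {1..n} \<Longrightarrow> integrable M (\<lambda>s. (B i s)\<^sup>2)"
    and "0 < w" and "w < 1"
    and "\<And>i. i \<in> {1..<n} \<Longrightarrow> dil_le M (B i) (B (Suc i))"
  shows "cost M B n id (mean_sched M B) w
           / Min ((\<lambda>\<tau>. cost M B n \<tau> (mean_sched M B) w) ` {\<tau>. \<tau> permutes {1..n}}) \<le> 4"
proof -
  have S: "sched M B n"
    using assms(1,3,4,8) by (simp add: sched_def sched_axioms_def)
  have S2: "sched2 M B n"
    using S assms(2) by (simp add: sched2_def sched2_axioms_def)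
  interpret sched2 M B n by (rule S2)
  let ?S = "(\<lambda>\<tau>. cost M B n \<tau> (mean_sched M B) w) ` {\<tau>. \<tau> permutes {1..n}}"
  have fin: "finite ?S" using finite_permutations[of "{1..n}"] by simp
  have ne: "?S \<noteq> {}" using permutes_id[of "{1..n}"] by blast
  obtain \<tau> where \<tau>: "\<tau> permutes {1..n}" and mn: "Min ?S = cost M B n \<tau> (mean_sched M B) w"
    using Min_in[OF fin ne] by auto
  have le: "cost M B n id (mean_sched M B) w \<le> 4 * Min ?S"
    unfolding mn using \<tau> assms(6,7) by (intro cost_le) auto
  have nn: "0 \<le> Min ?S"
    unfolding mn using \<tau> assms(6,7) by (intro cost_nonneg) auto
  show ?thesis
  proof (cases "Min ?S = 0")
    case True then show ?thesis by simp
  next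
    case False
    then have "0 < Min ?S" using nn by simp
    then show ?thesis using le by (simp add: divide_le_eq)
  qed
qed



end
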